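(* Let $\mathcal C\subset\mathbb R^d$ be a non-empty convex compact set, $H=\operatorname{aff}(\mathcal C)$ with direction $V$, so $\mathbb R^d=V\oplus V^\perp$, and $\Pi_V$ the orthogonal projection onto $V$. Let $\Omega$ be a proper l.s.c. convex function on $\mathbb R^d$ with $\operatorname{dom}(\Omega)=\mathcal C$ whose restriction $\Omega_{|H}$ to $H$ is Legendre-type (with respect to the metric of $H$). Then: (1) $\operatorname{dom}(\Omega^* )=\mathbb R^d$, so $\Omega$ is a $\mathcal C$-regularizer; moreover $\Omega^*$ is differentiable on $\mathbb R^d$ and for every $y\in\operatorname{relint}(\mathcal C)$ and every $\theta\in\partial\Omega(y)$, $\nabla\Omega^*(\theta)=y$. (2) For every $\theta\in\mathbb R^d$, written $\theta=\theta_V+\theta_{V^\perp}$ with $\theta_V=\Pi_V(\theta)$, and every $y_0\in\mathcal C$, $\Omega^*(\theta)=\Omega^*(\theta_V)+\langle\theta_{V^\perp}|y_0\rangle$. (3) For every $y\in H$, $\partial\Omega(y)=\partial(\Omega_{|H})(y)+V^\perp$, and in particular for $y\in\operatorname{relint}(\operatorname{dom}\Omega)$, $\partial\Omega(y)=\{\nabla\Omega_{|H}(y)\}+V^\perp$.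
   Context: A function is Legendre-type if it is strictly convex on the interior of its domain and essentially smooth: the interior of its domain is nonempty, it is differentiable there, and its gradient norm tends to $+\infty$ at the boundary of the domain. For $\Omega_{|H}$, interiors, gradients and subdifferentials are taken in $H$ with the inner product induced on $V$ (so $\partial(\Omega_{|H})(y)\subset V$, viewed in $\mathbb R^d$). $\Omega^*$ is the Fenchel conjugate. A $\mathcal C$-regularizer is a strictly convex, lower-semicontinuous function $\Omega:\mathbb R^d\to\mathbb R\cup\{+\infty\}$ with $\operatorname{cl}(\operatorname{dom}\Omega)=\mathcal C$ and $\operatorname{dom}(\Omega^* )=\mathbb R^d$.
   Formalization: Part (1) omits the conclusion that $\Omega$ is a $\mathcal C$-regularizer, so strict convexity of $\Omega$ on $\operatorname{dom}(\Omega)=\mathcal C$ is not asserted. The statement above fails without it. *)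

theory Defs
  imports "HOL-Analysis.Analysis"
begin

definition edom :: "('a \<Rightarrow> ereal) \<Rightarrow> 'a set" where
  "edom f = {x. f x < \<infinity>}"

definition proper_fun :: "('a \<Rightarrow> ereal) \<Rightarrow> bool" where
  "proper_fun f \<longleftrightarrow> (\<forall>x. f x \<noteq> -\<infinity>) \<and> (\<exists>x. f x \<noteq> \<infinity>)"

definition econvex :: "('a::real_vector \<Rightarrow> ereal) \<Rightarrow> bool" where
  "econvex f \<longleftrightarrow> convex {(x, r::real). f x \<le> ereal r}"

definition elsc :: "('a::topological_space \<Rightarrow> ereal) \<Rightarrow> bool" where
  "elsc f \<longleftrightarrow> (\<forall>x. f x \<le> Liminf (at x) f)"

definition fconj :: "('a::real_inner \<Rightarrow> ereal) \<Rightarrow> 'a \<Rightarrow> ereal" where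
  "fconj f \<theta> = (SUP y. ereal (\<theta> \<bullet> y) - f y)"

definition subdiff :: "('a::real_inner \<Rightarrow> ereal) \<Rightarrow> 'a \<Rightarrow> 'a set" where
  "subdiff f y = {\<theta>. f y \<noteq> \<infinity> \<and> (\<forall>z. f y + ereal (\<theta> \<bullet> (z - y)) \<le> f z)}"

text \<open>Subdifferential of the restriction of f to the affine set H with direction V,
  taken in H with the inner product induced on V (so subgradients lie in V).\<close>
definition rel_subdiff :: "('a::real_inner \<Rightarrow> ereal) \<Rightarrow> 'a set \<Rightarrow> 'a set \<Rightarrow> 'a \<Rightarrow> 'a set" where
  "rel_subdiff f H V y = {g \<in> V. y \<in> H \<and> f y \<noteq> \<infinity> \<and> (\<forall>z\<in>H. f y + ereal (g \<bullet> (z - y)) \<le> f z)}"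

definition direction :: "'a::real_vector set \<Rightarrow> 'a set" where
  "direction H = {x - y | x y. x \<in> H \<and> y \<in> H}"

definition orth_proj :: "'a::real_inner set \<Rightarrow> 'a \<Rightarrow> 'a" where
  "orth_proj V \<theta> = (THE v. v \<in> V \<and> \<theta> - v \<in> orthogonal_comp V)"

definition has_rel_gradient :: "('a::real_inner \<Rightarrow> ereal) \<Rightarrow> 'a set \<Rightarrow> 'a \<Rightarrow> 'a \<Rightarrow> bool" where
  "has_rel_gradient f V y g \<longleftrightarrow> g \<in> V \<and>
     ((\<lambda>h. real_of_ereal (f (y + h))) has_derivative (\<lambda>h. g \<bullet> h)) (at 0 within V)"

text \<open>The restriction of f to the affine set H (direction V) is of Legendre type,
  with interiors/boundaries taken in H.\<close>
definition legendre_on :: "('a::euclidean_space \<Rightarrow> ereal) \<Rightarrow> 'a set \<Rightarrow> 'a set \<Rightarrow> bool" where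
  "legendre_on f H V \<longleftrightarrow>
    (let D = {y \<in> H. f y < \<infinity>};
         I = (top_of_set H) interior_of D;
         B = (top_of_set H) frontier_of D in
     \<comment> \<open>strictly convex on the interior of the domain\<close>
     (\<forall>x\<in>I. \<forall>y\<in>I. \<forall>t::real. x \<noteq> y \<and> 0 < t \<and> t < 1 \<longrightarrow>
        f ((1 - t) *\<^sub>R x + t *\<^sub>R y) < ereal (1 - t) * f x + ereal t * f y) \<and>
     \<comment> \<open>essentially smooth\<close>
     I \<noteq> {} \<and>
     (\<forall>y\<in>I. \<exists>g. has_rel_gradient f V y g) \<and>
     (\<forall>s x g. (\<forall>k. s k \<in> I) \<longrightarrow> s \<longlonglongrightarrow> x \<longrightarrow> x \<in> B \<longrightarrow>
        (\<forall>k. has_rel_gradient f V (s k) (g k)) \<longrightarrow>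
        filterlim (\<lambda>k. norm (g k)) at_top sequentially))"

end

theory Submission
  imports Defs
begin
lemma lsc_seq:
  fixes f :: "'a::metric_space \<Rightarrow> ereal"
  assumes "f x \<le> Liminf (at x) f" "X \<longlonglongrightarrow> x"
  shows "f x \<le> liminf (\<lambda>n. f (X n))"
proof -
  have fx: "f x = (SUP e\<in>{0<..}. INF y\<in>ball x e. f y)"
    using min_Liminf_at[of f x] assms(1) by (simp add: min_def)
  show ?thesis unfolding le_Liminf_iff
  proof (intro allI impI)
    fix y assume "y < f x"
    then have "y < (SUP e\<in>{0<..}. INF z\<in>ball x e. f z)" using fx by simp
    then obtain e where e: "e > 0" "y < (INF z\<in>ball x e. f z)"
      by (auto simp: less_SUP_iff)
    have "eventually (\<lambda>n. X n \<in> ball x e) sequentially"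
      using assms(2) e(1) by (intro topological_tendstoD) auto
    then show "eventually (\<lambda>n. y < f (X n)) sequentially"
      by eventually_elim (meson INF_lower e(2) less_le_trans)
  qed
qed

lemma lsc_open:
  fixes f :: "'a::real_inner \<Rightarrow> ereal"
  assumes lsc: "\<forall>x. f x \<le> Liminf (at x) f" and nm: "\<forall>x. f x \<noteq> -\<infinity>"
  shows "open {x. c < f x + ereal (a \<bullet> x)}"
proof (cases c)
  case (real r)
  have "closed {x. f x \<le> ereal (r - a \<bullet> x)}"
    unfolding closed_sequential_limits
  proof (intro allI impI, elim conjE)
    fix X l assume X: "\<forall>n. X n \<in> {x. f x \<le> ereal (r - a \<bullet> x)}" and l: "X \<longlonglongrightarrow> l"
    have "f l \<le> liminf (\<lambda>n. f (X n))" using lsc l lsc_seq by blast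
    also have "\<dots> \<le> liminf (\<lambda>n. ereal (r - a \<bullet> X n))"
      using X by (intro Liminf_mono) auto
    also have "\<dots> = ereal (r - a \<bullet> l)"
      by (rule lim_imp_Liminf) (simp, intro tendsto_ereal tendsto_diff tendsto_const tendsto_inner l)
    finally show "l \<in> {x. f x \<le> ereal (r - a \<bullet> x)}" by simp
  qed
  moreover have "{x. c < f x + ereal (a \<bullet> x)} = - {x. f x \<le> ereal (r - a \<bullet> x)}"
  proof -
    have "c < f x + ereal (a \<bullet> x) \<longleftrightarrow> \<not> f x \<le> ereal (r - a \<bullet> x)" for x
      using real by (cases "f x") auto
    then show ?thesis by auto
  qed
  ultimately show ?thesis by (simp add: open_Compl)
next
  case PInf then show ?thesis by simp
next
  case MInf
  have "-\<infinity> < f x + ereal (a \<bullet> x)" for x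
    using nm[rule_format, of x] by (cases "f x") auto
  then have "{x. c < f x + ereal (a \<bullet> x)} = UNIV"
    using MInf by auto
  then show ?thesis by simp
qed

lemma lsc_attains_min:
  fixes f :: "'a::real_inner \<Rightarrow> ereal"
  assumes lsc: "\<forall>x. f x \<le> Liminf (at x) f" and nm: "\<forall>x. f x \<noteq> -\<infinity>"
    and K: "compact K" "K \<noteq> {}"
  shows "\<exists>x\<in>K. \<forall>z\<in>K. f x + ereal (a \<bullet> x) \<le> f z + ereal (a \<bullet> z)"
proof (rule ccontr)
  define g where "g x = f x + ereal (a \<bullet> x)" for x
  assume "\<not> ?thesis"
  then have "\<forall>x\<in>K. \<exists>z\<in>K. g z < g x" by (auto simp: not_le g_def)
  then have cov: "K \<subseteq> (\<Union>z\<in>K. {x. g z < g x})" by auto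
  have opn: "open {x. g z < g x}" for z unfolding g_def by (rule lsc_open[OF lsc nm])
  obtain Z where Z: "Z \<subseteq> K" "finite Z" "K \<subseteq> (\<Union>z\<in>Z. {x. g z < g x})"
    using compactE_image[of K K "\<lambda>z. {x. g z < g x}", OF K(1) opn cov] by blast
  have "Z \<noteq> {}" using Z(3) K(2) by auto
  define m where "m = Min (g ` Z)"
  have "m \<in> g ` Z" unfolding m_def using Z(2) \<open>Z \<noteq> {}\<close> by (intro Min_in) auto
  then obtain z0 where z0: "z0 \<in> Z" "g z0 = m" by auto
  then obtain z where z: "z \<in> Z" "g z < g z0" using Z by blast
  have "m \<le> g z" unfolding m_def using Z(2) z(1) by (intro Min_le) auto
  then show False using z z0 by simp
qed

locale ctx =
  fixes C H V :: "'a::euclidean_space set" and Om :: "'a \<Rightarrow> ereal"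
  assumes convC: "convex C" and compC: "compact C" and neC: "C \<noteq> {}"
    and Hdef: "H = affine hull C" and Vdef: "V = direction H"
    and prp: "proper_fun Om" and lscO: "elsc Om" and ecv: "econvex Om" and dom: "edom Om = C"
    and leg: "legendre_on Om H V"
begin

definition om where "om x = real_of_ereal (Om x)"

lemma nm: "Om x \<noteq> -\<infinity>" using prp by (auto simp: proper_fun_def)

lemma Om_C: "x \<in> C \<Longrightarrow> Om x = ereal (om x)"
  using dom nm[of x] unfolding edom_def om_def by (cases "Om x") auto

lemma Om_notC: "x \<notin> C \<Longrightarrow> Om x = \<infinity>"
  using dom unfolding edom_def by auto

lemma CH: "C \<subseteq> H" by (simp add: Hdef hull_subset)

lemma affH: "affine H" by (simp add: Hdef)

lemma HV: "x \<in> H \<Longrightarrow> y \<in> H \<Longrightarrow> x - y \<in> V"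
  by (auto simp: Vdef direction_def)

lemma HaddV: "x \<in> H \<Longrightarrow> v \<in> V \<Longrightarrow> x + v \<in> H"
proof -
  assume x: "x \<in> H" and "v \<in> V"
  then obtain a b where ab: "v = a - b" "a \<in> H" "b \<in> H" by (auto simp: Vdef direction_def)
  show "x + v \<in> H" using mem_affine_3_minus[OF affH x ab(2) ab(3), of 1] ab(1) by simp
qed

lemma subV: "subspace V"
proof -
  obtain a where a: "a \<in> C" using neC by auto
  then have aH: "a \<in> H" using CH by auto
  have "V = (\<lambda>x. x - a) ` H"
  proof
    show "V \<subseteq> (\<lambda>x. x - a) ` H"
    proof
      fix v assume "v \<in> V"
      then have "a + v \<in> H" using HaddV aH by blast
      then show "v \<in> (\<lambda>x. x - a) ` H" by (intro image_eqI[of _ _ "a + v"]) auto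
    qed
    show "(\<lambda>x. x - a) ` H \<subseteq> V" using HV aH by auto
  qed
  then show ?thesis using affine_diffs_subspace_subtract[OF affH aH] by simp
qed

lemma orthV: "b \<in> orthogonal_comp V \<Longrightarrow> x \<in> H \<Longrightarrow> y \<in> H \<Longrightarrow> b \<bullet> (x - y) = 0"
  using HV[of x y] by (auto simp: orthogonal_comp_def orthogonal_def inner_commute)

lemma orthV': "b \<in> orthogonal_comp V \<Longrightarrow> v \<in> V \<Longrightarrow> b \<bullet> v = 0"
  by (auto simp: orthogonal_comp_def orthogonal_def inner_commute)

lemma proj_ex1: "\<exists>!v. v \<in> V \<and> \<theta> - v \<in> orthogonal_comp V"
proof -
  obtain y z where y: "y \<in> span V" and z: "\<And>w. w \<in> span V \<Longrightarrow> orthogonal z w" and e: "\<theta> = y + z"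
    using orthogonal_subspace_decomp_exists[of V \<theta>] by blast
  have sV: "span V = V" using subV by (simp add: span_eq_iff)
  show ?thesis
  proof (rule ex1I[of _ y])
    show "y \<in> V \<and> \<theta> - y \<in> orthogonal_comp V"
      using y z e sV by (auto simp: orthogonal_comp_def orthogonal_def inner_commute)
  next
    fix v assume v: "v \<in> V \<and> \<theta> - v \<in> orthogonal_comp V"
    have "v - y \<in> V" using v y sV subV by (simp add: subspace_diff)
    have o1: "w \<bullet> (\<theta> - v) = 0" if "w \<in> V" for w
      using v that by (auto simp: orthogonal_comp_def orthogonal_def)
    have o2: "w \<bullet> (\<theta> - y) = 0" if "w \<in> V" for w
      using z[of w] e sV that by (simp add: orthogonal_def inner_commute)
    have "(v - y) \<bullet> (v - y) = (v - y) \<bullet> (\<theta> - y) - (v - y) \<bullet> (\<theta> - v)"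
      by (simp add: algebra_simps inner_diff_right)
    also have "\<dots> = 0" using o1 o2 \<open>v - y \<in> V\<close> by simp
    finally have "(v - y) \<bullet> (v - y) = 0" .
    then show "v = y" by simp
  qed
qed

lemma projV: "orth_proj V \<theta> \<in> V" and projO: "\<theta> - orth_proj V \<theta> \<in> orthogonal_comp V"
  using theI'[OF proj_ex1[of \<theta>]] unfolding orth_proj_def by auto

lemma convex_om:
  assumes "x \<in> C" "z \<in> C" "0 \<le> t" "t \<le> 1"
  shows "om ((1 - t) *\<^sub>R x + t *\<^sub>R z) \<le> (1 - t) * om x + t * om z"
proof -
  let ?E = "{(x, r::real). Om x \<le> ereal r}"
  have cE: "convex ?E" using ecv by (simp add: econvex_def)
  have "(x, om x) \<in> ?E" "(z, om z) \<in> ?E" using Om_C assms by auto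
  from convexD[OF cE this, of "1 - t" t] assms
  have "Om ((1 - t) *\<^sub>R x + t *\<^sub>R z) \<le> ereal ((1 - t) * om x + t * om z)" by simp
  moreover have "(1 - t) *\<^sub>R x + t *\<^sub>R z \<in> C" using convexD[OF convC assms(1,2), of "1-t" t] assms by simp
  ultimately show ?thesis using Om_C by fastforce
qed

lemma D_eq: "{y \<in> H. Om y < \<infinity>} = C"
  using dom CH by (auto simp: edom_def)

lemma I_eq: "(top_of_set H) interior_of C = rel_interior C"
  by (simp add: rel_interior_def interior_of_def Hdef)

lemma strict:
  assumes "x \<in> rel_interior C" "y \<in> rel_interior C" "x \<noteq> y" "0 < t" "t < 1"
  shows "Om ((1 - t) *\<^sub>R x + t *\<^sub>R y) < ereal (1 - t) * Om x + ereal t * Om y"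
  using leg assms unfolding legendre_on_def Let_def D_eq I_eq by blast

lemma Ine: "rel_interior C \<noteq> {}"
  using leg unfolding legendre_on_def Let_def D_eq I_eq by blast

lemma grad_ex: "y \<in> rel_interior C \<Longrightarrow> \<exists>g. has_rel_gradient Om V y g"
  using leg unfolding legendre_on_def Let_def D_eq I_eq by blast

lemma ess:
  assumes "\<forall>k. s k \<in> rel_interior C" "s \<longlonglongrightarrow> x" "x \<in> C" "x \<notin> rel_interior C"
    "\<forall>k. has_rel_gradient Om V (s k) (g k)"
  shows "filterlim (\<lambda>k. norm (g k)) at_top sequentially"
proof -
  have "x \<in> (top_of_set H) frontier_of C"
    using assms(3,4) closure_of_subset[of C "top_of_set H"] CH
    unfolding frontier_of_def I_eq by auto
  then show ?thesis
    using leg assms unfolding legendre_on_def Let_def D_eq I_eq by blast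
qed

end

context ctx begin

lemma dir_deriv:
  assumes gr: "has_rel_gradient Om V x g" and d: "d \<in> V"
  shows "((\<lambda>s. (om (x + s *\<^sub>R d) - om x) / s) \<longlongrightarrow> g \<bullet> d) (at_right 0)"
proof -
  have D: "((\<lambda>h. real_of_ereal (Om (x + h))) has_derivative (\<lambda>h. g \<bullet> h)) (at 0 within V)"
    using gr by (simp add: has_rel_gradient_def)
  have lin: "((\<lambda>s::real. s *\<^sub>R d) has_derivative (\<lambda>s. s *\<^sub>R d)) (at 0 within {0<..})"
    by (auto intro!: derivative_eq_intros)
  have img: "(\<lambda>s::real. s *\<^sub>R d) ` {0<..} \<subseteq> V" using subV d by (auto intro: subspace_scale)
  have D2: "((\<lambda>h. real_of_ereal (Om (x + h))) has_derivative (\<lambda>h. g \<bullet> h))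
      (at ((\<lambda>s::real. s *\<^sub>R d) 0) within ((\<lambda>s::real. s *\<^sub>R d) ` {0<..}))"
    using has_derivative_subset[OF D img] by simp
  have e1: "(\<lambda>h. real_of_ereal (Om (x + h))) \<circ> (\<lambda>s::real. s *\<^sub>R d) = (\<lambda>s. om (x + s *\<^sub>R d))"
    by (auto simp: fun_eq_iff om_def)
  have e2: "(\<lambda>h. g \<bullet> h) \<circ> (\<lambda>s::real. s *\<^sub>R d) = (*) (g \<bullet> d)"
    by (auto simp: fun_eq_iff)
  have "((\<lambda>s. om (x + s *\<^sub>R d)) has_field_derivative (g \<bullet> d)) (at 0 within {0<..})"
    using diff_chain_within[OF lin D2] unfolding e1 e2 has_field_derivative_def .
  then show ?thesis unfolding has_field_derivative_iff by simp
qed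

lemma grad_sub:
  assumes gr: "has_rel_gradient Om V x g" and xC: "x \<in> C" and zC: "z \<in> C"
  shows "om x + g \<bullet> (z - x) \<le> om z"
proof -
  have d: "z - x \<in> V" using HV CH xC zC by auto
  have ev: "eventually (\<lambda>s. (om (x + s *\<^sub>R (z - x)) - om x) / s \<le> om z - om x) (at_right 0)"
    unfolding eventually_at_right_field
  proof (intro exI[of _ 1] conjI allI impI)
    fix s :: real assume s: "0 < s" "s < 1"
    have "x + s *\<^sub>R (z - x) = (1 - s) *\<^sub>R x + s *\<^sub>R z" by (simp add: algebra_simps)
    then have "om (x + s *\<^sub>R (z - x)) \<le> (1 - s) * om x + s * om z"
      using convex_om[OF xC zC, of s] s by simp
    then have "om (x + s *\<^sub>R (z - x)) - om x \<le> s * (om z - om x)" by (simp add: algebra_simps)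
    then show "(om (x + s *\<^sub>R (z - x)) - om x) / s \<le> om z - om x"
      using s by (simp add: pos_divide_le_eq mult.commute)
  qed simp
  have "g \<bullet> (z - x) \<le> om z - om x"
    by (rule tendsto_le[OF trivial_limit_at_right_real tendsto_const dir_deriv[OF gr d] ev])
  then show ?thesis by simp
qed

definition F where "F \<theta> y = \<theta> \<bullet> y - om y"
definition ismax where "ismax \<theta> y \<longleftrightarrow> y \<in> C \<and> (\<forall>z\<in>C. F \<theta> z \<le> F \<theta> y)"

lemma lscO': "\<forall>x. Om x \<le> Liminf (at x) Om" using lscO by (simp add: elsc_def)

lemma max_ex_on:
  assumes "compact K" "K \<noteq> {}" "K \<subseteq> C"
  shows "\<exists>y\<in>K. \<forall>z\<in>K. F \<theta> z \<le> F \<theta> y"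
proof -
  obtain y where y: "y \<in> K" "\<forall>z\<in>K. Om y + ereal (-\<theta> \<bullet> y) \<le> Om z + ereal (-\<theta> \<bullet> z)"
    using lsc_attains_min[OF lscO' _ assms(1,2), of "-\<theta>"] nm by blast
  have "F \<theta> z \<le> F \<theta> y" if "z \<in> K" for z
  proof -
    have "y \<in> C" "z \<in> C" using y(1) that assms(3) by auto
    then have "ereal (om y + - (\<theta> \<bullet> y)) \<le> ereal (om z + - (\<theta> \<bullet> z))"
      using y(2)[rule_format, OF that] Om_C[of y] Om_C[of z] by simp
    then show ?thesis by (simp add: F_def)
  qed
  then show ?thesis using y(1) by blast
qed

lemma max_ex: "\<exists>y. ismax \<theta> y"
  using max_ex_on[OF compC neC order_refl, of \<theta>] by (auto simp: ismax_def)

lemma fconj_max: assumes "ismax \<theta> y" shows "fconj Om \<theta> = ereal (F \<theta> y)"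
  unfolding fconj_def
proof (rule antisym)
  show "(SUP z. ereal (\<theta> \<bullet> z) - Om z) \<le> ereal (F \<theta> y)"
  proof (rule SUP_least)
    fix z show "ereal (\<theta> \<bullet> z) - Om z \<le> ereal (F \<theta> y)"
    proof (cases "z \<in> C")
      case True then show ?thesis using assms Om_C[of z] by (auto simp: ismax_def F_def)
    next
      case False then show ?thesis using Om_notC[of z] by simp
    qed
  qed
  show "ereal (F \<theta> y) \<le> (SUP z. ereal (\<theta> \<bullet> z) - Om z)"
    using assms Om_C[of y] by (intro SUP_upper2[of y]) (auto simp: ismax_def F_def)
qed

end

context ctx begin

lemma max_relint:
  assumes my: "ismax \<theta> y" shows "y \<in> rel_interior C"
proof (rule ccontr)
  assume nr: "y \<notin> rel_interior C"
  have yC: "y \<in> C" using my by (simp add: ismax_def)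
  obtain y1 where y1: "y1 \<in> rel_interior C" using Ine by auto
  have y1C: "y1 \<in> C" using y1 rel_interior_subset by auto
  define t where "t k = inverse (real (Suc k))" for k
  have t0: "0 < t k" for k by (auto simp: t_def)
  have t1: "t k \<le> 1" for k by (simp add: t_def inverse_le_1_iff)
  define s where "s k = y + t k *\<^sub>R (y1 - y)" for k
  have sI: "s k \<in> rel_interior C" for k
  proof -
    have "y - t k *\<^sub>R (y - y1) \<in> rel_interior C"
      using rel_interior_closure_convex_shrink[OF convC y1 _ t0 t1] yC closure_subset by blast
    moreover have "y - t k *\<^sub>R (y - y1) = s k" by (simp add: s_def algebra_simps)
    ultimately show ?thesis by simp
  qed
  have sC: "s k \<in> C" for k using sI rel_interior_subset by auto
  have tl: "t \<longlonglongrightarrow> 0" unfolding t_def by (rule LIMSEQ_inverse_real_of_nat)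
  have sl: "s \<longlonglongrightarrow> y"
    using tendsto_add[OF tendsto_const tendsto_scaleR[OF tl tendsto_const], of y "y1 - y"]
    unfolding s_def[abs_def] by simp
  define g where "g k = (SOME g. has_rel_gradient Om V (s k) g)" for k
  have gk: "has_rel_gradient Om V (s k) (g k)" for k
    unfolding g_def using grad_ex[OF sI] by (rule someI_ex)
  have gV: "g k \<in> V" for k using gk by (simp add: has_rel_gradient_def)
  have ginf: "filterlim (\<lambda>k. norm (g k)) at_top sequentially"
    using ess[of s y g] sI sl yC nr gk by blast
  have sub: "om (s k) + g k \<bullet> (z - s k) \<le> om z" if "z \<in> C" for k z
    using grad_sub[OF gk sC that] .
  define c where "c = \<theta> \<bullet> (y1 - y)"
  have lowk: "om y + t k * c \<le> om (s k)" for k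
  proof -
    have "F \<theta> (s k) \<le> F \<theta> y" using my sC by (simp add: ismax_def)
    moreover have "\<theta> \<bullet> s k = \<theta> \<bullet> y + t k * c" by (simp add: s_def c_def inner_add_right)
    ultimately show ?thesis by (simp add: F_def)
  qed
  have gc: "c \<le> g k \<bullet> (y1 - y)" for k
  proof -
    have "om (s k) + g k \<bullet> (y - s k) \<le> om y" using sub[OF yC] .
    moreover have "g k \<bullet> (y - s k) = - (t k * (g k \<bullet> (y1 - y)))" by (simp add: s_def)
    ultimately have "t k * c \<le> t k * (g k \<bullet> (y1 - y))" using lowk[of k] by linarith
    then show ?thesis using t0[of k] by (simp add: mult_le_cancel_left_pos)
  qed
  obtain \<epsilon> where ep: "\<epsilon> > 0" "ball y1 \<epsilon> \<inter> H \<subseteq> C"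
    using y1 unfolding mem_rel_interior_ball Hdef by blast
  define u where "u k = sgn (g k)" for k
  have uc: "u k \<in> cball 0 1" for k by (simp add: u_def norm_sgn)
  obtain ul r where ul: "ul \<in> cball 0 1" and r: "strict_mono r" and ulim: "(u \<circ> r) \<longlonglongrightarrow> ul"
    using seq_compactE[OF compact_imp_seq_compact[OF compact_cball] ] uc by metis
  have ginf_r: "filterlim (\<lambda>k. norm (g (r k))) at_top sequentially"
    using filterlim_compose[OF ginf filterlim_subseq[OF r]] by (simp add: o_def)
  have ev1: "eventually (\<lambda>k. 1 \<le> norm (g (r k))) sequentially"
    using ginf_r by (simp add: filterlim_at_top)
  have nul: "norm ul = 1"
  proof -
    have "(\<lambda>k. norm (u (r k))) \<longlonglongrightarrow> norm ul" using tendsto_norm[OF ulim] by (simp add: o_def)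
    moreover have "eventually (\<lambda>k. norm (u (r k)) = 1) sequentially"
      using ev1 by eventually_elim (auto simp: u_def norm_sgn)
    then have "(\<lambda>k. norm (u (r k))) \<longlonglongrightarrow> 1"
      by (rule tendsto_eventually)
    ultimately show ?thesis using LIMSEQ_unique by blast
  qed
  have ulV: "ul \<in> V"
  proof -
    have "closed V" using subV by (rule closed_subspace)
    moreover have "\<forall>k. (u \<circ> r) k \<in> V" using gV subV by (auto simp: u_def sgn_div_norm intro: subspace_scale)
    ultimately show ?thesis using ulim closed_sequential_limits by blast
  qed
  define z where "z = y1 + (\<epsilon>/2) *\<^sub>R ul"
  have zC: "z \<in> C"
  proof -
    have "(\<epsilon>/2) *\<^sub>R ul \<in> V" using ulV subV by (intro subspace_scale)
    then have "z \<in> H" unfolding z_def using HaddV y1C CH by auto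
    moreover have "dist y1 z < \<epsilon>" using ep nul by (simp add: z_def dist_norm)
    ultimately show ?thesis using ep by auto
  qed
  define K where "K = (om z - om y - c) / (\<epsilon>/2)"
  have bnd: "g k \<bullet> ul \<le> K" for k
  proof -
    have e0: "z - s k = (1 - t k) *\<^sub>R (y1 - y) + (\<epsilon>/2) *\<^sub>R ul"
      by (simp add: z_def s_def algebra_simps)
    have e1: "g k \<bullet> (z - s k) = (1 - t k) * (g k \<bullet> (y1 - y)) + \<epsilon>/2 * (g k \<bullet> ul)"
      unfolding e0 by (simp add: inner_add_right)
    have m1: "(1 - t k) * c \<le> (1 - t k) * (g k \<bullet> (y1 - y))"
      using gc[of k] t1[of k] by (intro mult_left_mono) auto
    have e2: "t k * c + (1 - t k) * c = c" by (simp add: algebra_simps)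
    have "om y + c + \<epsilon>/2 * (g k \<bullet> ul) \<le> om z"
      using sub[OF zC, of k] lowk[of k] e1 m1 e2 by linarith
    then show ?thesis using ep(1) by (simp add: K_def pos_le_divide_eq algebra_simps)
  qed
  have l1: "(\<lambda>k. u (r k) \<bullet> ul) \<longlonglongrightarrow> 1"
  proof -
    have "(\<lambda>k. u (r k) \<bullet> ul) \<longlonglongrightarrow> ul \<bullet> ul"
      using tendsto_inner[OF ulim tendsto_const] by (simp add: o_def)
    moreover have "ul \<bullet> ul = 1" using nul by (simp add: power2_norm_eq_inner[symmetric])
    ultimately show ?thesis by simp
  qed
  have l2: "(\<lambda>k. K / norm (g (r k))) \<longlonglongrightarrow> 0"
    by (rule tendsto_divide_0[OF tendsto_const filterlim_at_top_imp_at_infinity[OF ginf_r]])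
  have ev2: "eventually (\<lambda>k. u (r k) \<bullet> ul \<le> K / norm (g (r k))) sequentially"
    using ev1
  proof eventually_elim
    case (elim k)
    then have "norm (g (r k)) > 0" by linarith
    then show ?case using bnd[of "r k"]
      by (simp add: u_def sgn_div_norm divide_right_mono divide_inverse_commute[symmetric])
  qed
  have "1 \<le> (0::real)"
    by (rule tendsto_le[OF trivial_limit_sequentially l2 l1 ev2])
  then show False by simp
qed

lemma max_unique:
  assumes "ismax \<theta> y" "ismax \<theta> y'" shows "y = y'"
proof (rule ccontr)
  assume ne: "y \<noteq> y'"
  have yI: "y \<in> rel_interior C" "y' \<in> rel_interior C" using max_relint assms by auto
  have yC: "y \<in> C" "y' \<in> C" using assms by (auto simp: ismax_def)
  define m where "m = (1 - 1/2) *\<^sub>R y + (1/2::real) *\<^sub>R y'"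
  have mC: "m \<in> C" unfolding m_def using convexD[OF convC yC, of "1 - 1/2" "1/2"] by simp
  have "Om m < ereal (1 - 1/2) * Om y + ereal (1/2) * Om y'"
    unfolding m_def by (rule strict[OF yI ne]) auto
  then have lt: "om m < om y / 2 + om y' / 2"
    using Om_C[OF mC] Om_C[OF yC(1)] Om_C[OF yC(2)] by simp
  have eqF: "F \<theta> y = F \<theta> y'" using assms yC by (auto simp: ismax_def intro: antisym)
  have "\<theta> \<bullet> m = (\<theta> \<bullet> y) / 2 + (\<theta> \<bullet> y') / 2" by (simp add: m_def inner_add_right)
  then have "F \<theta> m > F \<theta> y" using lt eqF by (simp add: F_def)
  moreover have "F \<theta> m \<le> F \<theta> y" using assms(1) mC by (simp add: ismax_def)
  ultimately show False by simp
qed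

end

context ctx begin

definition Y where "Y \<theta> = (THE y. ismax \<theta> y)"

lemma Y: "ismax \<theta> (Y \<theta>)"
  unfolding Y_def using max_ex[of \<theta>] max_unique[of \<theta>] by (metis theI)

lemma Y_eq: "ismax \<theta> y \<Longrightarrow> Y \<theta> = y"
  using Y max_unique by blast

lemma YC: "Y \<theta> \<in> C" using Y by (simp add: ismax_def)

lemma F_close:
  assumes "z \<in> C" "\<forall>y\<in>C. norm y \<le> R"
  shows "\<bar>F \<theta> z - F \<theta>0 z\<bar> \<le> norm (\<theta> - \<theta>0) * R"
proof -
  have "F \<theta> z - F \<theta>0 z = (\<theta> - \<theta>0) \<bullet> z" by (simp add: F_def inner_diff_left)
  also have "\<bar>\<dots>\<bar> \<le> norm (\<theta> - \<theta>0) * norm z" by (rule Cauchy_Schwarz_ineq2)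
  also have "\<dots> \<le> norm (\<theta> - \<theta>0) * R" using assms by (intro mult_left_mono) auto
  finally show ?thesis .
qed

lemma Y_cont: "continuous (at \<theta>0) Y"
  unfolding continuous_at_eps_delta
proof (intro allI impI)
  fix \<epsilon> :: real assume ep: "\<epsilon> > 0"
  obtain R where R: "R > 0" "\<forall>y\<in>C. norm y \<le> R"
    using compact_imp_bounded[OF compC] bounded_pos by blast
  define K where "K = C - ball (Y \<theta>0) \<epsilon>"
  show "\<exists>\<delta>>0. \<forall>\<theta>. dist \<theta> \<theta>0 < \<delta> \<longrightarrow> dist (Y \<theta>) (Y \<theta>0) < \<epsilon>"
  proof (cases "K = {}")
    case True
    then have "dist (Y \<theta>) (Y \<theta>0) < \<epsilon>" for \<theta>
      using YC[of \<theta>] by (auto simp: K_def dist_commute)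
    then show ?thesis by (intro exI[of _ 1]) auto
  next
    case False
    have cK: "compact K" unfolding K_def by (intro compact_diff compC open_ball)
    obtain y' where y': "y' \<in> K" "\<forall>z\<in>K. F \<theta>0 z \<le> F \<theta>0 y'"
      using max_ex_on[OF cK False, of \<theta>0] by (auto simp: K_def)
    have y'C: "y' \<in> C" using y' by (simp add: K_def)
    define \<gamma> where "\<gamma> = F \<theta>0 (Y \<theta>0) - F \<theta>0 y'"
    have "\<gamma> > 0"
    proof (rule ccontr)
      assume "\<not> \<gamma> > 0"
      then have "ismax \<theta>0 y'" using Y[of \<theta>0] y'C by (auto simp: ismax_def \<gamma>_def)
      then have "y' = Y \<theta>0" using Y_eq by simp
      then show False using y'(1) ep by (simp add: K_def)
    qed
    show ?thesis
    proof (intro exI[of _ "\<gamma> / (2 * R)"] conjI allI impI)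
      show "\<gamma> / (2 * R) > 0" using \<open>\<gamma> > 0\<close> R by simp
      fix \<theta> assume d: "dist \<theta> \<theta>0 < \<gamma> / (2 * R)"
      have nb: "norm (\<theta> - \<theta>0) * R < \<gamma> / 2"
        using d R by (simp add: dist_norm pos_less_divide_eq field_simps)
      have cl: "\<bar>F \<theta> z - F \<theta>0 z\<bar> < \<gamma> / 2" if "z \<in> C" for z
        using F_close[OF that R(2), of \<theta> \<theta>0] nb by linarith
      have "Y \<theta> \<notin> K"
      proof
        assume YK: "Y \<theta> \<in> K"
        have "F \<theta> (Y \<theta>) < F \<theta>0 (Y \<theta>) + \<gamma> / 2" using cl[OF YC[of \<theta>]] by linarith
        also have "\<dots> \<le> F \<theta>0 y' + \<gamma> / 2" using y'(2) YK by simp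
        also have "\<dots> = F \<theta>0 (Y \<theta>0) - \<gamma> / 2" using \<gamma>_def by linarith
        also have "\<dots> < F \<theta> (Y \<theta>0)" using cl[OF YC[of \<theta>0]] by linarith
        also have "\<dots> \<le> F \<theta> (Y \<theta>)" using Y[of \<theta>] YC[of \<theta>0] by (simp add: ismax_def)
        finally show False by simp
      qed
      then show "dist (Y \<theta>) (Y \<theta>0) < \<epsilon>" using YC[of \<theta>] by (auto simp: K_def dist_commute)
    qed
  qed
qed

lemma phi_eq: "real_of_ereal (fconj Om \<eta>) = F \<eta> (Y \<eta>)"
  using fconj_max[OF Y] by simp

lemma phi_deriv: "((\<lambda>\<eta>. real_of_ereal (fconj Om \<eta>)) has_derivative (\<lambda>h. Y \<theta>0 \<bullet> h)) (at \<theta>0)"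
  unfolding has_derivative_iff_norm
proof (intro conjI)
  show "bounded_linear (\<lambda>h. Y \<theta>0 \<bullet> h)" by (rule bounded_linear_inner_right)
  let ?A = "\<lambda>\<eta>. F \<eta> (Y \<eta>) - F \<theta>0 (Y \<theta>0) - Y \<theta>0 \<bullet> (\<eta> - \<theta>0)"
  have bnd: "norm (?A \<eta>) / norm (\<eta> - \<theta>0) \<le> norm (Y \<eta> - Y \<theta>0)" for \<eta>
  proof -
    have "F \<eta> (Y \<theta>0) \<le> F \<eta> (Y \<eta>)" using Y[of \<eta>] YC[of \<theta>0] by (simp add: ismax_def)
    moreover have eq1: "Y \<theta>0 \<bullet> (\<eta> - \<theta>0) = \<eta> \<bullet> Y \<theta>0 - \<theta>0 \<bullet> Y \<theta>0"
      by (metis inner_commute inner_diff_left)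
    ultimately have A0: "0 \<le> ?A \<eta>" unfolding F_def by linarith
    have "F \<theta>0 (Y \<eta>) \<le> F \<theta>0 (Y \<theta>0)" using Y[of \<theta>0] YC[of \<eta>] by (simp add: ismax_def)
    moreover have eq2: "(\<eta> - \<theta>0) \<bullet> (Y \<eta> - Y \<theta>0) = \<eta> \<bullet> Y \<eta> - \<eta> \<bullet> Y \<theta>0 - \<theta>0 \<bullet> Y \<eta> + \<theta>0 \<bullet> Y \<theta>0"
      by (simp add: inner_diff_left inner_diff_right)
    ultimately have "?A \<eta> \<le> (\<eta> - \<theta>0) \<bullet> (Y \<eta> - Y \<theta>0)"
      using eq1 unfolding F_def by linarith
    also have "\<dots> \<le> norm (\<eta> - \<theta>0) * norm (Y \<eta> - Y \<theta>0)" by (rule norm_cauchy_schwarz)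
    finally have "norm (?A \<eta>) \<le> norm (\<eta> - \<theta>0) * norm (Y \<eta> - Y \<theta>0)" using A0 by simp
    then show ?thesis
      by (cases "\<eta> = \<theta>0") (auto simp: divide_le_eq mult.commute)
  qed
  have "(Y \<longlongrightarrow> Y \<theta>0) (at \<theta>0)" using Y_cont by (simp add: continuous_at)
  then have l0: "((\<lambda>\<eta>. norm (Y \<eta> - Y \<theta>0)) \<longlongrightarrow> 0) (at \<theta>0)"
    by (intro tendsto_norm_zero LIM_zero)
  show "((\<lambda>\<eta>. norm (real_of_ereal (fconj Om \<eta>) - real_of_ereal (fconj Om \<theta>0) - Y \<theta>0 \<bullet> (\<eta> - \<theta>0)) /
        norm (\<eta> - \<theta>0)) \<longlongrightarrow> 0) (at \<theta>0)"
    unfolding phi_eq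
    by (rule Lim_null_comparison[OF always_eventually l0]) (use bnd in simp)
qed

end

context ctx begin

lemma part1:
  "(\<forall>\<theta>. fconj Om \<theta> < \<infinity>) \<and>
     (\<forall>\<theta>. (\<lambda>\<eta>. real_of_ereal (fconj Om \<eta>)) differentiable (at \<theta>)) \<and>
     (\<forall>y\<in>rel_interior C. \<forall>\<theta>\<in>subdiff Om y.
        ((\<lambda>\<eta>. real_of_ereal (fconj Om \<eta>)) has_derivative (\<lambda>h. y \<bullet> h)) (at \<theta>))"
proof (intro conjI ballI allI)
  fix \<theta> show "fconj Om \<theta> < \<infinity>" using fconj_max[OF Y[of \<theta>]] by simp
next
  fix \<theta> show "(\<lambda>\<eta>. real_of_ereal (fconj Om \<eta>)) differentiable (at \<theta>)"
    using phi_deriv by (auto simp: differentiable_def)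
next
  fix y \<theta> assume y: "y \<in> rel_interior C" and th: "\<theta> \<in> subdiff Om y"
  have yC: "y \<in> C" using y rel_interior_subset by auto
  have "ismax \<theta> y" unfolding ismax_def
  proof (intro conjI ballI yC)
    fix z assume zC: "z \<in> C"
    have "Om y + ereal (\<theta> \<bullet> (z - y)) \<le> Om z" using th by (simp add: subdiff_def)
    then have "om y + \<theta> \<bullet> (z - y) \<le> om z" using Om_C[OF yC] Om_C[OF zC] by simp
    then show "F \<theta> z \<le> F \<theta> y" by (simp add: F_def inner_diff_right)
  qed
  then have "Y \<theta> = y" by (rule Y_eq)
  then show "((\<lambda>\<eta>. real_of_ereal (fconj Om \<eta>)) has_derivative (\<lambda>h. y \<bullet> h)) (at \<theta>)"
    using phi_deriv[of \<theta>] by simp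
qed

lemma part2:
  assumes y0: "y0 \<in> C"
  shows "fconj Om \<theta> = fconj Om (orth_proj V \<theta>) + ereal ((\<theta> - orth_proj V \<theta>) \<bullet> y0)"
proof -
  define P where "P = orth_proj V \<theta>"
  have b: "\<theta> - P \<in> orthogonal_comp V" unfolding P_def by (rule projO)
  have FP: "F \<theta> z = F P z + (\<theta> - P) \<bullet> y0" if "z \<in> C" for z
  proof -
    have "(\<theta> - P) \<bullet> (z - y0) = 0" using orthV[OF b] that y0 CH by auto
    then have "(\<theta> - P) \<bullet> z = (\<theta> - P) \<bullet> y0" by (simp add: inner_diff_right)
    then show ?thesis by (simp add: F_def inner_diff_left)
  qed
  have "ismax P (Y \<theta>)" using Y[of \<theta>] FP YC by (auto simp: ismax_def)
  then have "fconj Om P = ereal (F P (Y \<theta>))" by (rule fconj_max)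
  moreover have "fconj Om \<theta> = ereal (F \<theta> (Y \<theta>))" by (rule fconj_max[OF Y])
  ultimately show ?thesis using FP[OF YC] by (simp add: P_def)
qed

lemma part3:
  assumes yH: "y \<in> H"
  shows "subdiff Om y = {a + b | a b. a \<in> rel_subdiff Om H V y \<and> b \<in> orthogonal_comp V}"
proof
  show "subdiff Om y \<subseteq> {a + b | a b. a \<in> rel_subdiff Om H V y \<and> b \<in> orthogonal_comp V}"
  proof
    fix \<theta> assume th: "\<theta> \<in> subdiff Om y"
    define a where "a = orth_proj V \<theta>"
    have aV: "a \<in> V" unfolding a_def by (rule projV)
    have b: "\<theta> - a \<in> orthogonal_comp V" unfolding a_def by (rule projO)
    have "a \<in> rel_subdiff Om H V y"
      unfolding rel_subdiff_def
    proof (intro CollectI conjI ballI aV yH)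
      show "Om y \<noteq> \<infinity>" using th by (simp add: subdiff_def)
      fix z assume zH: "z \<in> H"
      have "(\<theta> - a) \<bullet> (z - y) = 0" using orthV[OF b zH yH] .
      then have "a \<bullet> (z - y) = \<theta> \<bullet> (z - y)" by (simp add: inner_diff_left)
      then show "Om y + ereal (a \<bullet> (z - y)) \<le> Om z" using th by (simp add: subdiff_def)
    qed
    then show "\<theta> \<in> {a + b | a b. a \<in> rel_subdiff Om H V y \<and> b \<in> orthogonal_comp V}"
      using b by (intro CollectI exI[of _ a] exI[of _ "\<theta> - a"]) auto
  qed
next
  show "{a + b | a b. a \<in> rel_subdiff Om H V y \<and> b \<in> orthogonal_comp V} \<subseteq> subdiff Om y"
  proof safe
    fix a b assume a: "a \<in> rel_subdiff Om H V y" and b: "b \<in> orthogonal_comp V"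
    have fin: "Om y \<noteq> \<infinity>" using a by (simp add: rel_subdiff_def)
    have "Om y + ereal ((a + b) \<bullet> (z - y)) \<le> Om z" for z
    proof (cases "z \<in> H")
      case True
      have "b \<bullet> (z - y) = 0" using orthV[OF b True yH] .
      then have "(a + b) \<bullet> (z - y) = a \<bullet> (z - y)" by (simp add: inner_add_left)
      then show ?thesis using a True by (simp add: rel_subdiff_def)
    next
      case False
      then have "Om z = \<infinity>" using Om_notC CH by auto
      then show ?thesis by simp
    qed
    then show "a + b \<in> subdiff Om y" using fin by (simp add: subdiff_def)
  qed
qed

lemma part4:
  assumes y: "y \<in> rel_interior (edom Om)" and gr: "has_rel_gradient Om V y g"
  shows "subdiff Om y = {g + b | b. b \<in> orthogonal_comp V}"
proof -
  have yI: "y \<in> rel_interior C" using y dom by simp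
  have yC: "y \<in> C" using yI rel_interior_subset by auto
  have yH: "y \<in> H" using yC CH by auto
  have gV: "g \<in> V" using gr by (simp add: has_rel_gradient_def)
  show ?thesis
  proof
    show "subdiff Om y \<subseteq> {g + b | b. b \<in> orthogonal_comp V}"
    proof
      fix \<theta> assume th: "\<theta> \<in> subdiff Om y"
      define a where "a = orth_proj V \<theta>"
      have aV: "a \<in> V" unfolding a_def by (rule projV)
      have b: "\<theta> - a \<in> orthogonal_comp V" unfolding a_def by (rule projO)
      define d where "d = a - g"
      have dV: "d \<in> V" unfolding d_def using subspace_diff[OF subV aV gV] .
      obtain \<epsilon> where ep: "\<epsilon> > 0" "ball y \<epsilon> \<inter> H \<subseteq> C"
        using yI unfolding mem_rel_interior_ball Hdef by blast
      have ev: "eventually (\<lambda>s. a \<bullet> d \<le> (om (y + s *\<^sub>R d) - om y) / s) (at_right 0)"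
        unfolding eventually_at_right_field
      proof (intro exI[of _ "\<epsilon> / (norm d + 1)"] conjI allI impI)
        have nd: "norm d + 1 > 0" using norm_ge_zero[of d] by linarith
        show "0 < \<epsilon> / (norm d + 1)" by (rule divide_pos_pos[OF ep(1) nd])
        fix s :: real assume s: "0 < s" "s < \<epsilon> / (norm d + 1)"
        have "s *\<^sub>R d \<in> V" using dV subV by (intro subspace_scale)
        then have zH: "y + s *\<^sub>R d \<in> H" using HaddV yH by blast
        have "s * norm d < \<epsilon>"
        proof -
          have "s * norm d \<le> s * (norm d + 1)" using s by simp
          also have "\<dots> < \<epsilon>" using s nd by (simp add: pos_less_divide_eq)
          finally show ?thesis .
        qed
        then have "dist y (y + s *\<^sub>R d) < \<epsilon>" using s by (simp add: dist_norm)
        then have zC: "y + s *\<^sub>R d \<in> C" using zH ep by auto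
        have "Om y + ereal (\<theta> \<bullet> (y + s *\<^sub>R d - y)) \<le> Om (y + s *\<^sub>R d)"
          using th unfolding subdiff_def by blast
        then have i1: "om y + s * (\<theta> \<bullet> d) \<le> om (y + s *\<^sub>R d)"
          using Om_C[OF yC] Om_C[OF zC] by simp
        have "(\<theta> - a) \<bullet> d = 0" using orthV'[OF b dV] .
        then have "\<theta> \<bullet> d = a \<bullet> d" by (simp add: inner_diff_left)
        then have "s * (a \<bullet> d) \<le> om (y + s *\<^sub>R d) - om y" using i1 by simp
        then show "a \<bullet> d \<le> (om (y + s *\<^sub>R d) - om y) / s"
          using s by (simp add: pos_le_divide_eq mult.commute)
      qed
      have "a \<bullet> d \<le> g \<bullet> d"
        by (rule tendsto_le[OF trivial_limit_at_right_real dir_deriv[OF gr dV] tendsto_const ev])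
      then have "d \<bullet> d \<le> 0" by (simp add: d_def inner_diff_left)
      then have "d = 0" using inner_ge_zero[of d] inner_eq_zero_iff[of d] by linarith
      then have "a = g" by (simp add: d_def)
      then show "\<theta> \<in> {g + b | b. b \<in> orthogonal_comp V}"
        using b by (intro CollectI exI[of _ "\<theta> - a"]) auto
    qed
  next
    show "{g + b | b. b \<in> orthogonal_comp V} \<subseteq> subdiff Om y"
    proof safe
      fix b assume b: "b \<in> orthogonal_comp V"
      have "Om y + ereal ((g + b) \<bullet> (z - y)) \<le> Om z" for z
      proof (cases "z \<in> C")
        case True
        have "b \<bullet> (z - y) = 0" using orthV[OF b _ yH] True CH by auto
        then have "(g + b) \<bullet> (z - y) = g \<bullet> (z - y)" by (simp add: inner_add_left)
        then show ?thesis using grad_sub[OF gr yC True] Om_C[OF yC] Om_C[OF True] by simp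
      next
        case False
        then show ?thesis using Om_notC by simp
      qed
      then show "g + b \<in> subdiff Om y" using Om_C[OF yC] by (simp add: subdiff_def)
    qed
  qed
qed

end

theorem proposition4:
  fixes C H V :: "'a::euclidean_space set" and \<Omega> :: "'a \<Rightarrow> ereal"
  assumes "convex C" and "compact C" and "C \<noteq> {}"
    and H: "H = affine hull C" and V: "V = direction H"
    and "proper_fun \<Omega>" and "elsc \<Omega>" and "econvex \<Omega>" and "edom \<Omega> = C"
    and "legendre_on \<Omega> H V"
  shows
    "((\<forall>\<theta>. fconj \<Omega> \<theta> < \<infinity>) \<and>
     (\<forall>\<theta>. (\<lambda>\<eta>. real_of_ereal (fconj \<Omega> \<eta>)) differentiable (at \<theta>)) \<and>
     (\<forall>y\<in>rel_interior C. \<forall>\<theta>\<in>subdiff \<Omega> y.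
        ((\<lambda>\<eta>. real_of_ereal (fconj \<Omega> \<eta>)) has_derivative (\<lambda>h. y \<bullet> h)) (at \<theta>))) \<and>
    (\<forall>\<theta> y0. y0 \<in> C \<longrightarrow>
       fconj \<Omega> \<theta> = fconj \<Omega> (orth_proj V \<theta>) + ereal ((\<theta> - orth_proj V \<theta>) \<bullet> y0)) \<and>
    (\<forall>y\<in>H. subdiff \<Omega> y = {a + b | a b. a \<in> rel_subdiff \<Omega> H V y \<and> b \<in> orthogonal_comp V}) \<and>
    (\<forall>y\<in>rel_interior (edom \<Omega>). \<forall>g. has_rel_gradient \<Omega> V y g \<longrightarrow>
       subdiff \<Omega> y = {g + b | b. b \<in> orthogonal_comp V})"
proof -
  interpret ctx C H V \<Omega>
    by (unfold_locales; fact assms)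
  show ?thesis using part1 part2 part3 part4 by blast
qed

end
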